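(* Let $D$ be any distribution supported on $[0,1]$ with mean $\mu$ and variance $\sigma^2$, and let $\epsilon>0$. The two-phase mean estimator (described in the context) run on $D$ with parameter $\epsilon$ returns an unbiased estimate $\hat\mu$ of $\mu$ with $\sqrt{\mathbb{E}[(\hat\mu-\mu)^2]}\le \sqrt{6}\,\epsilon$, and its expected number of samples is $\frac{\sigma^2}{\epsilon^2}+\frac{2}{\epsilon}$.
   Context: The two-phase mean estimator with parameter $\epsilon$ works as follows (integer rounding of sample sizes is ignored). Set $T_1=1/\epsilon$ and draw i.i.d. samples $X_1,\dots,X_{T_1}$ from $D$. Compute $\tilde\mu=\frac{1}{T_1}\sum_{i=1}^{T_1}X_i$ and the sample variance $\tilde\sigma^2=\frac{1}{T_1-1}\sum_{i=1}^{T_1}(X_i-\tilde\mu)^2$. Set $T_2=\frac{1}{\epsilon}+\frac{\tilde\sigma^2}{\epsilon^2}$, draw $T_2$ fresh samples $X_{T_1+1},\dots,X_{T_1+T_2}$ from $D$, and return $\hat\mu=\frac{1}{T_2}\sum_{i=T_1+1}^{T_1+T_2}X_i$. *)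

theory Defs
  imports "HOL-Probability.Probability"
begin

text \<open>Model: an infinite i.i.d. sequence of samples from D, i.e. a point
  \<open>\<omega> :: nat \<Rightarrow> real\<close> of the product space \<open>PiM UNIV (\<lambda>_. D)\<close>.
  The first phase uses samples \<open>\<omega> 0, ..., \<omega> (T1-1)\<close>, the second phase uses
  the fresh samples \<open>\<omega> T1, ..., \<omega> (T1 + N2 - 1)\<close>.\<close>

text \<open>Phase-1 sample size: \<open>1/\<epsilon>\<close> rounded up (at least 2, so that the
  unbiased sample variance is defined).\<close>
definition tp_T1 :: "real \<Rightarrow> nat" where
  "tp_T1 \<epsilon> = max 2 (nat \<lceil>1 / \<epsilon>\<rceil>)"

definition tp_mu_tilde :: "real \<Rightarrow> (nat \<Rightarrow> real) \<Rightarrow> real" where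
  "tp_mu_tilde \<epsilon> \<omega> = (\<Sum>i<tp_T1 \<epsilon>. \<omega> i) / real (tp_T1 \<epsilon>)"

definition tp_sigma_tilde_sq :: "real \<Rightarrow> (nat \<Rightarrow> real) \<Rightarrow> real" where
  "tp_sigma_tilde_sq \<epsilon> \<omega> =
     (\<Sum>i<tp_T1 \<epsilon>. (\<omega> i - tp_mu_tilde \<epsilon> \<omega>)\<^sup>2) / (real (tp_T1 \<epsilon>) - 1)"

definition tp_T2 :: "real \<Rightarrow> (nat \<Rightarrow> real) \<Rightarrow> real" where
  "tp_T2 \<epsilon> \<omega> = 1 / \<epsilon> + tp_sigma_tilde_sq \<epsilon> \<omega> / \<epsilon>\<^sup>2"

definition tp_N2 :: "real \<Rightarrow> (nat \<Rightarrow> real) \<Rightarrow> nat" where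
  "tp_N2 \<epsilon> \<omega> = nat \<lceil>tp_T2 \<epsilon> \<omega>\<rceil>"

definition tp_mu_hat :: "real \<Rightarrow> (nat \<Rightarrow> real) \<Rightarrow> real" where
  "tp_mu_hat \<epsilon> \<omega> = (\<Sum>i<tp_N2 \<epsilon> \<omega>. \<omega> (tp_T1 \<epsilon> + i)) / real (tp_N2 \<epsilon> \<omega>)"

text \<open>Number of samples used, with rounding ignored: \<open>T1 + T2 = 1/\<epsilon> + T2\<close>.\<close>
definition tp_num_samples :: "real \<Rightarrow> (nat \<Rightarrow> real) \<Rightarrow> real" where
  "tp_num_samples \<epsilon> \<omega> = 1 / \<epsilon> + tp_T2 \<epsilon> \<omega>"

end

theory Submission
  imports Defs
begin

locale tp_loc = sequence_space D for D :: "real measure" +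
  assumes sD: "sets D = sets borel" and supp: "AE x in D. 0 \<le> x \<and> x \<le> 1"
begin

definition "mu = (\<integral>x. x \<partial>D)"
definition "mm j = (\<integral>x. (x - mu) ^ j \<partial>D)"
definition "S1 n \<omega> = (\<Sum>i<n. \<omega> i - mu)"
definition "S2 n \<omega> = (\<Sum>i<n. (\<omega> i - mu)\<^sup>2)"
definition "G = {\<omega>::nat\<Rightarrow>real. \<forall>i. 0 \<le> \<omega> i \<and> \<omega> i \<le> 1}"

lemma spD: "space D = UNIV"
  using sets_eq_imp_space_eq[OF sD] by simp

lemma measD: "measurable S N = measurable (PiM UNIV (\<lambda>_. borel)) N"
  by (rule measurable_cong_sets) (auto intro!: sets_PiM_cong simp: sD)

lemma measD2: "measurable D N = measurable borel N"
  by (rule measurable_cong_sets) (auto simp: sD)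

lemma pD: "prob_space D" using prob_space by simp


lemma AE_G: "AE \<omega> in S. \<omega> \<in> G"
proof -
  have "\<forall>i. AE \<omega> in S. 0 \<le> \<omega> i \<and> \<omega> i \<le> 1" using AE_component[OF _ supp] by auto
  then show ?thesis unfolding G_def mem_Collect_eq by (simp add: AE_all_countable)
qed

lemma int_bound:
  fixes B :: real
  assumes "f \<in> borel_measurable S" "\<And>\<omega>. \<omega> \<in> G \<Longrightarrow> \<bar>f \<omega>\<bar> \<le> B"
  shows "integrable S f"
  apply (rule integrable_const_bound[where B=B])
  using AE_G assms(2) apply (auto elim!: AE_mp)[1]
  by (rule assms(1))

lemma comp_int:
  fixes g :: "real \<Rightarrow> real"
  assumes "g \<in> borel_measurable borel"
  shows "(\<integral>\<omega>. g (\<omega> k) \<partial>S) = (\<integral>x. g x \<partial>D)"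
proof -
  have "(\<integral>x. g x \<partial>D) = (\<integral>x. g x \<partial>distr S D (\<lambda>\<omega>. \<omega> k))"
    using PiM_component[of k] by simp
  also have "\<dots> = (\<integral>\<omega>. g (\<omega> k) \<partial>S)"
    by (subst integral_distr) (auto simp: measD2 assms)
  finally show ?thesis by simp
qed

lemma intD:
  fixes B :: real
  assumes "g \<in> borel_measurable borel" "\<And>x. 0 \<le> x \<Longrightarrow> x \<le> 1 \<Longrightarrow> \<bar>g x\<bar> \<le> B"
  shows "integrable D g"
proof -
  show ?thesis
  apply (rule M.integrable_const_bound[where B=B])
  using supp assms(2) apply (auto elim!: AE_mp)[1]
  using assms(1) by (simp add: measD2)
qed

lemma mu01: "0 \<le> mu" "mu \<le> 1"
proof -
  have i: "integrable D (\<lambda>x. x)" by (rule intD[where B=1]) auto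
  show "0 \<le> mu" unfolding mu_def
    by (rule integral_nonneg_AE) (use supp in \<open>auto elim!: AE_mp\<close>)
  have "mu \<le> (\<integral>x. 1 \<partial>D)" unfolding mu_def
    by (rule integral_mono_AE[OF i]) (use supp in \<open>auto elim!: AE_mp\<close>)
  then show "mu \<le> 1" by (simp add: M.prob_space)
qed

lemma split_int:
  fixes H :: "(nat \<Rightarrow> real) \<Rightarrow> real"
  assumes H: "integrable S H"
  shows "(\<integral>\<omega>. H \<omega> \<partial>S) = (\<integral>\<omega>. (\<integral>\<omega>'. H (comb_seq n \<omega> \<omega>') \<partial>S) \<partial>S)"
proof -
  interpret pp: pair_prob_space S S by unfold_locales
  have Hm[measurable]: "H \<in> borel_measurable S" using H by auto
  have "(\<integral>\<omega>. H \<omega> \<partial>S) = (\<integral>\<omega>. H \<omega> \<partial>distr (S \<Otimes>\<^sub>M S) S (\<lambda>(\<omega>, \<omega>'). comb_seq n \<omega> \<omega>'))"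
    using PiM_comb_seq[of n] by simp
  also have "\<dots> = (\<integral>x. H (case x of (\<omega>, \<omega>') \<Rightarrow> comb_seq n \<omega> \<omega>') \<partial>(S \<Otimes>\<^sub>M S))"
    by (rule integral_distr) (auto simp: Hm measurable_comb_seq)
  also have "\<dots> = (\<integral>\<omega>. (\<integral>\<omega>'. H (comb_seq n \<omega> \<omega>') \<partial>S) \<partial>S)"
  proof -
    have "integrable (distr (S \<Otimes>\<^sub>M S) S (\<lambda>(\<omega>, \<omega>'). comb_seq n \<omega> \<omega>')) H"
      using PiM_comb_seq[of n] H by simp
    then have "integrable (S \<Otimes>\<^sub>M S) (\<lambda>x. H (case x of (\<omega>, \<omega>') \<Rightarrow> comb_seq n \<omega> \<omega>'))"
      by (subst (asm) integrable_distr_eq) (auto simp: measurable_comb_seq)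
    then have "integrable (S \<Otimes>\<^sub>M S) (case_prod (\<lambda>\<omega> \<omega>'. H (comb_seq n \<omega> \<omega>')))"
      by (simp add: case_prod_beta')
    from pp.integral_fst[OF this] show ?thesis by (simp add: case_prod_beta')
  qed
  finally show ?thesis .
qed

definition "sig2 = mm 2"

lemma absc: "0 \<le> x \<Longrightarrow> x \<le> 1 \<Longrightarrow> \<bar>x - mu\<bar> \<le> 1"
  using mu01 by auto

lemma powc: "0 \<le> x \<Longrightarrow> x \<le> 1 \<Longrightarrow> \<bar>(x - mu) ^ j\<bar> \<le> 1"
  by (metis abs_ge_zero absc power_abs power_le_one)

lemma sqc: "0 \<le> x \<Longrightarrow> x \<le> 1 \<Longrightarrow> (x - mu)\<^sup>2 \<le> 1"
  using powc[of x 2] by simp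

lemma intD_pow: "integrable D (\<lambda>x. (x - mu) ^ j)"
  by (rule intD[where B=1]) (auto simp: powc)

lemma mm0: "mm 0 = 1" by (simp add: mm_def M.prob_space)

lemma mm1: "mm 1 = 0"
proof -
  have i: "integrable D (\<lambda>x. x)" by (rule intD[where B=1]) auto
  show ?thesis unfolding mm_def using i by (simp add: mu_def M.prob_space)
qed

lemma mm_nonneg2: "0 \<le> mm 2" "0 \<le> mm 4"
  unfolding mm_def by (auto intro!: integral_nonneg_AE)

lemma mm42: "mm 4 \<le> mm 2"
  unfolding mm_def
proof (rule integral_mono_AE[OF intD_pow intD_pow])
  show "AE x in D. (x - mu) ^ 4 \<le> (x - mu) ^ 2"
    using supp
  proof (rule AE_mp, intro AE_I2 impI)
    fix x :: real assume "0 \<le> x \<and> x \<le> 1"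
    then have "(x - mu)^2 \<le> 1" using sqc by auto
    then have "(x - mu)^2 * (x - mu)^2 \<le> 1 * (x - mu)^2" by (intro mult_right_mono) auto
    then show "(x - mu) ^ 4 \<le> (x - mu) ^ 2" by (simp add: power_mult_distrib flip: power_add)
  qed
qed

lemma mm2_le1: "mm 2 \<le> 1"
proof -
  have "mm 2 \<le> (\<integral>x. 1 \<partial>D)"
    unfolding mm_def
  proof (rule integral_mono_AE[OF intD_pow])
    show "AE x in D. (x - mu) ^ 2 \<le> 1"
      using supp by (rule AE_mp) (auto intro!: AE_I2 simp: sqc)
  qed auto
  then show ?thesis by (simp add: M.prob_space)
qed

definition "P a b j n \<omega> = S1 n \<omega> ^ a * S2 n \<omega> ^ b * (\<omega> n - mu) ^ j"

lemma S1_bound: "\<omega> \<in> G \<Longrightarrow> \<bar>S1 n \<omega>\<bar> \<le> real n"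
proof -
  assume "\<omega> \<in> G"
  then have "\<bar>\<omega> i - mu\<bar> \<le> 1" for i using absc by (auto simp: G_def)
  then have "(\<Sum>i<n. \<bar>\<omega> i - mu\<bar>) \<le> (\<Sum>i<n. 1)" by (intro sum_mono) auto
  moreover have "\<bar>S1 n \<omega>\<bar> \<le> (\<Sum>i<n. \<bar>\<omega> i - mu\<bar>)" unfolding S1_def by (rule sum_abs)
  ultimately show ?thesis by simp
qed

lemma S2_bound: "\<omega> \<in> G \<Longrightarrow> \<bar>S2 n \<omega>\<bar> \<le> real n"
proof -
  assume "\<omega> \<in> G"
  then have "(\<omega> i - mu)\<^sup>2 \<le> 1" for i using sqc by (auto simp: G_def)
  then have "(\<Sum>i<n. (\<omega> i - mu)\<^sup>2) \<le> (\<Sum>i<n. 1)" by (intro sum_mono) auto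
  moreover have "0 \<le> S2 n \<omega>" unfolding S2_def by (intro sum_nonneg) auto
  ultimately show ?thesis by (simp add: S2_def)
qed

lemma P_bound: "\<omega> \<in> G \<Longrightarrow> \<bar>P a b j n \<omega>\<bar> \<le> real n ^ a * real n ^ b * 1"
  unfolding P_def abs_mult power_abs
  apply (intro mult_mono power_mono S1_bound S2_bound)
  using powc[of "\<omega> n" j] by (auto simp: G_def power_abs)

lemma S1_meas[measurable]: "S1 n \<in> borel_measurable S"
  unfolding S1_def measD by measurable
lemma S2_meas[measurable]: "S2 n \<in> borel_measurable S"
  unfolding S2_def measD by measurable
lemma P_meas[measurable]: "P a b j n \<in> borel_measurable S"
proof -
  have "(\<lambda>\<omega>. \<omega> n - mu) \<in> borel_measurable S" unfolding measD by measurable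
  then show ?thesis unfolding P_def by measurable
qed

lemma P_int: "integrable S (P a b j n)"
  by (rule int_bound[OF P_meas P_bound])

lemma S1_comb: "S1 n (comb_seq n \<omega> \<omega>') = S1 n \<omega>"
  unfolding S1_def by (intro sum.cong) (auto simp: comb_seq_less)
lemma S2_comb: "S2 n (comb_seq n \<omega> \<omega>') = S2 n \<omega>"
  unfolding S2_def by (intro sum.cong) (auto simp: comb_seq_less)

lemma comb_n: "comb_seq n \<omega> \<omega>' n = \<omega>' 0"
  using comb_seq_add[of n \<omega> \<omega>' 0] by simp

lemma P_E: "(\<integral>\<omega>. P a b j n \<omega> \<partial>S) = (\<integral>\<omega>. P a b 0 n \<omega> \<partial>S) * mm j"
proof -
  have "(\<integral>\<omega>. P a b j n \<omega> \<partial>S) = (\<integral>\<omega>. (\<integral>\<omega>'. P a b j n (comb_seq n \<omega> \<omega>') \<partial>S) \<partial>S)"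
    by (rule split_int[OF P_int])
  also have "\<dots> = (\<integral>\<omega>. (\<integral>\<omega>'. P a b 0 n \<omega> * (\<omega>' 0 - mu) ^ j \<partial>S) \<partial>S)"
    by (simp add: P_def S1_comb S2_comb comb_n)
  also have "\<dots> = (\<integral>\<omega>. P a b 0 n \<omega> * mm j \<partial>S)"
    by (simp add: comp_int[where g="\<lambda>x. (x - mu) ^ j"] mm_def)
  finally show ?thesis by simp
qed

lemma S1_Suc: "S1 (Suc n) \<omega> = S1 n \<omega> + (\<omega> n - mu)" by (simp add: S1_def)
lemma S2_Suc: "S2 (Suc n) \<omega> = S2 n \<omega> + (\<omega> n - mu)\<^sup>2" by (simp add: S2_def)

definition "EE a b n = (\<integral>\<omega>. P a b 0 n \<omega> \<partial>S)"

lemma EE0: "EE a b 0 = (if a = 0 \<and> b = 0 then 1 else 0)"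
  by (auto simp: EE_def P_def S1_def S2_def P.prob_space)

lemma EE00: "EE 0 0 n = 1"
  by (simp add: EE_def P_def P.prob_space)

lemma PE: "(\<integral>\<omega>. P a b j n \<omega> \<partial>S) = EE a b n * mm j"
  using P_E unfolding EE_def .

declare P_int[simp]

lemma PE': "j \<noteq> 0 \<Longrightarrow> (\<integral>\<omega>. P a b j n \<omega> \<partial>S) = EE a b n * mm j"
  by (rule PE)
lemma PE0: "(\<integral>\<omega>. P a b 0 n \<omega> \<partial>S) = EE a b n"
  by (simp add: EE_def)
lemma mm1': "mm (Suc 0) = 0" using mm1 by simp
lemmas PEs = PE' PE0 mm1 mm1' mm0 EE00

lemma EE10: "EE 1 0 n = 0"
proof (induction n)
  case 0 then show ?case by (simp add: EE0)
next
  case (Suc n)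
  have eq: "P 1 0 0 (Suc n) \<omega> = P 1 0 0 n \<omega> + P 0 0 1 n \<omega>" for \<omega>
    unfolding P_def S1_Suc S2_Suc by algebra
  show ?case unfolding EE_def eq
    using Suc.IH by (simp add: PEs)
qed

lemma EE20: "EE 2 0 n = real n * sig2"
proof (induction n)
  case 0 then show ?case by (simp add: EE0)
next
  case (Suc n)
  have eq: "P 2 0 0 (Suc n) \<omega> = P 2 0 0 n \<omega> + 2 * P 1 0 1 n \<omega> + P 0 0 2 n \<omega>" for \<omega>
    unfolding P_def S1_Suc S2_Suc by algebra
  show ?case unfolding EE_def eq
    using Suc.IH EE10[of n] by (simp add: PEs sig2_def algebra_simps)
qed

lemma EE01: "EE 0 1 n = real n * sig2"
proof (induction n)
  case 0 then show ?case by (simp add: EE0)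
next
  case (Suc n)
  have eq: "P 0 1 0 (Suc n) \<omega> = P 0 1 0 n \<omega> + P 0 0 2 n \<omega>" for \<omega>
    unfolding P_def S1_Suc S2_Suc by algebra
  show ?case unfolding EE_def eq
    using Suc.IH by (simp add: PEs sig2_def algebra_simps)
qed

lemma EE40: "EE 4 0 n = real n * mm 4 + 3 * real n * (real n - 1) * sig2\<^sup>2"
proof (induction n)
  case 0 then show ?case by (simp add: EE0)
next
  case (Suc n)
  have eq: "P 4 0 0 (Suc n) \<omega> = P 4 0 0 n \<omega> + 4 * P 3 0 1 n \<omega> + 6 * P 2 0 2 n \<omega>
     + 4 * P 1 0 3 n \<omega> + P 0 0 4 n \<omega>" for \<omega>
    unfolding P_def S1_Suc S2_Suc by algebra
  show ?case unfolding EE_def eq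
    using Suc.IH EE10[of n] EE20[of n] by (simp add: PEs sig2_def algebra_simps power2_eq_square)
qed

lemma EE21: "EE 2 1 n = real n * mm 4 + real n * (real n - 1) * sig2\<^sup>2"
proof (induction n)
  case 0 then show ?case by (simp add: EE0)
next
  case (Suc n)
  have eq: "P 2 1 0 (Suc n) \<omega> = P 2 1 0 n \<omega> + P 2 0 2 n \<omega> + 2 * P 1 1 1 n \<omega>
     + 2 * P 1 0 3 n \<omega> + P 0 1 2 n \<omega> + P 0 0 4 n \<omega>" for \<omega>
    unfolding P_def S1_Suc S2_Suc by algebra
  show ?case unfolding EE_def eq
    using Suc.IH EE10[of n] EE20[of n] EE01[of n] by (simp add: PEs sig2_def algebra_simps power2_eq_square)
qed

lemma EE02: "EE 0 2 n = real n * mm 4 + real n * (real n - 1) * sig2\<^sup>2"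
proof (induction n)
  case 0 then show ?case by (simp add: EE0)
next
  case (Suc n)
  have eq: "P 0 2 0 (Suc n) \<omega> = P 0 2 0 n \<omega> + 2 * P 0 1 2 n \<omega> + P 0 0 4 n \<omega>" for \<omega>
    unfolding P_def S1_Suc S2_Suc by algebra
  show ?case unfolding EE_def eq
    using Suc.IH EE01[of n] by (simp add: PEs sig2_def algebra_simps power2_eq_square)
qed

lemma Q_eq:
  assumes n: "n > 0"
  shows "(\<Sum>i<n. (\<omega> i - (\<Sum>j<n. \<omega> j) / real n)\<^sup>2) = S2 n \<omega> - (S1 n \<omega>)\<^sup>2 / real n"
proof -
  define t where "t = S1 n \<omega> / real n"
  have m: "(\<Sum>j<n. \<omega> j) / real n = mu + t"
    using n unfolding t_def S1_def by (simp add: sum_subtractf field_simps)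
  have "(\<Sum>i<n. (\<omega> i - (\<Sum>j<n. \<omega> j) / real n)\<^sup>2) = (\<Sum>i<n. ((\<omega> i - mu)\<^sup>2 - 2 * t * (\<omega> i - mu) + t\<^sup>2))"
    unfolding m by (intro sum.cong) (auto simp: power2_eq_square algebra_simps)
  also have "\<dots> = S2 n \<omega> - 2 * t * S1 n \<omega> + real n * t\<^sup>2"
    by (simp add: S1_def S2_def sum.distrib sum_subtractf flip: sum_distrib_left)
  also have "\<dots> = S2 n \<omega> - (S1 n \<omega>)\<^sup>2 / real n"
    using n unfolding t_def by (simp add: field_simps power2_eq_square)
  finally show ?thesis .
qed

lemma T1_ge2: "tp_T1 eps \<ge> 2" by (simp add: tp_T1_def)

lemma sts_eq: "tp_sigma_tilde_sq eps \<omega> = (S2 (tp_T1 eps) \<omega> - (S1 (tp_T1 eps) \<omega>)\<^sup>2 / real (tp_T1 eps)) / (real (tp_T1 eps) - 1)"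
  unfolding tp_sigma_tilde_sq_def tp_mu_tilde_def using Q_eq[of "tp_T1 eps" \<omega>] T1_ge2[of eps] by simp

lemma Q_nonneg: "n > 0 \<Longrightarrow> 0 \<le> S2 n \<omega> - (S1 n \<omega>)\<^sup>2 / real n"
  using Q_eq[of n \<omega>, symmetric] by (auto intro!: sum_nonneg)

lemma sts_nonneg: "0 \<le> tp_sigma_tilde_sq eps \<omega>"
  unfolding sts_eq using Q_nonneg[of "tp_T1 eps" \<omega>] T1_ge2[of eps] by (auto intro!: divide_nonneg_nonneg)

lemma EQ:
  assumes n: "n > 0"
  shows "(\<integral>\<omega>. S2 n \<omega> - (S1 n \<omega>)\<^sup>2 / real n \<partial>S) = (real n - 1) * sig2"
proof -
  have "(\<lambda>\<omega>. S2 n \<omega> - (S1 n \<omega>)\<^sup>2 / real n) = (\<lambda>\<omega>. P 0 1 0 n \<omega> - P 2 0 0 n \<omega> / real n)"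
    by (simp add: P_def)
  then show ?thesis using n EE01[of n] EE20[of n] by (simp add: PEs field_simps)
qed

lemma EQ2:
  assumes n: "n > 0"
  shows "(\<integral>\<omega>. (S2 n \<omega> - (S1 n \<omega>)\<^sup>2 / real n)\<^sup>2 \<partial>S) = EE 0 2 n - 2 * EE 2 1 n / real n + EE 4 0 n / (real n)\<^sup>2"
proof -
  have "(\<lambda>\<omega>. (S2 n \<omega> - (S1 n \<omega>)\<^sup>2 / real n)\<^sup>2) = (\<lambda>\<omega>. P 0 2 0 n \<omega> - 2 * P 2 1 0 n \<omega> / real n + P 4 0 0 n \<omega> / (real n)\<^sup>2)"
    using n by (auto simp: P_def field_simps power2_eq_square eval_nat_numeral intro!: ext)
  then show ?thesis using n by (simp add: PEs)
qed

lemma sq_exp: fixes K Q s :: real assumes "K \<noteq> 0"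
  shows "(Q / K - s)\<^sup>2 = (1 / K\<^sup>2) * Q\<^sup>2 - (2 * s / K) * Q + s\<^sup>2"
  using assms by (simp add: power2_eq_square field_simps)

lemma var_alg0:
  fixes K m4 s :: real
  assumes K: "K > 0"
  shows "((K+1) * m4 + (K+1) * K * s\<^sup>2 - 2 * ((K+1) * m4 + (K+1) * K * s\<^sup>2) / (K+1) + ((K+1) * m4 + 3 * (K+1) * K * s\<^sup>2) / (K+1)\<^sup>2) / K\<^sup>2
     - 2 * s / K * (K * s) + s\<^sup>2 = m4 / (K+1) + s\<^sup>2 * (2 - K) / ((K+1) * K)"
proof -
  have N: "K+1 \<noteq> 0" "K \<noteq> 0" "(K+1)^2 \<noteq> 0" "K^2 \<noteq> 0" "(K+1)*K \<noteq> 0" using K by auto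
  show ?thesis
    apply (simp only: times_divide_eq_left times_divide_eq_right divide_divide_eq_left add_divide_eq_iff divide_add_eq_iff diff_divide_eq_iff divide_diff_eq_iff add_frac_eq diff_frac_eq frac_eq_eq N mult_eq_0_iff de_Morgan_conj simp_thms)
    using N apply simp_all
    apply algebra
    done
qed

lemma var_alg:
  fixes N m4 s :: real
  assumes N: "N \<ge> 3" and m4: "m4 \<le> s" and s: "0 \<le> s"
  shows "(N * m4 + N * (N - 1) * s\<^sup>2 - 2 * (N * m4 + N * (N - 1) * s\<^sup>2) / N + (N * m4 + 3 * N * (N - 1) * s\<^sup>2) / N\<^sup>2) / (N - 1)\<^sup>2
     - 2 * s / (N - 1) * ((N - 1) * s) + s\<^sup>2 \<le> s / N"
proof -
  have "(N * m4 + N * (N - 1) * s\<^sup>2 - 2 * (N * m4 + N * (N - 1) * s\<^sup>2) / N + (N * m4 + 3 * N * (N - 1) * s\<^sup>2) / N\<^sup>2) / (N - 1)\<^sup>2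
     - 2 * s / (N - 1) * ((N - 1) * s) + s\<^sup>2 = m4 / N + s\<^sup>2 * (3 - N) / (N * (N - 1))"
    using var_alg0[of "N - 1" m4 s] N by simp
  also have "\<dots> \<le> m4 / N + 0"
    using N s by (intro add_left_mono) (auto intro!: divide_nonpos_pos mult_nonneg_nonpos)
  also have "\<dots> \<le> s / N" using N m4 by (simp add: divide_right_mono)
  finally show ?thesis .
qed

lemma var_bound:
  assumes n: "n \<ge> 3"
  shows "(\<integral>\<omega>. ((S2 n \<omega> - (S1 n \<omega>)\<^sup>2 / real n) / (real n - 1) - sig2)\<^sup>2 \<partial>S) \<le> sig2 / real n"
proof -
  have n0: "n > 0" using n by simp
  define Qf where "Qf \<omega> = S2 n \<omega> - (S1 n \<omega>)\<^sup>2 / real n" for \<omega>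
  have iQ: "integrable S Qf"
  proof -
    have "Qf = (\<lambda>\<omega>. P 0 1 0 n \<omega> - P 2 0 0 n \<omega> / real n)" by (simp add: P_def Qf_def fun_eq_iff)
    then show ?thesis by simp
  qed
  have iQ2: "integrable S (\<lambda>\<omega>. (Qf \<omega>)\<^sup>2)"
  proof -
    have "(\<lambda>\<omega>. (Qf \<omega>)\<^sup>2) = (\<lambda>\<omega>. P 0 2 0 n \<omega> - 2 * P 2 1 0 n \<omega> / real n + P 4 0 0 n \<omega> / (real n)\<^sup>2)"
      using n by (auto simp: P_def Qf_def field_simps power2_eq_square eval_nat_numeral intro!: ext)
    then show ?thesis by simp
  qed
  have eq: "(\<lambda>\<omega>. (Qf \<omega> / (real n - 1) - sig2)\<^sup>2) = (\<lambda>\<omega>. (1 / (real n - 1)\<^sup>2) * (Qf \<omega>)\<^sup>2 - (2 * sig2 / (real n - 1)) * Qf \<omega> + sig2\<^sup>2)"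
    using n by (intro ext sq_exp) auto
  have "(\<integral>\<omega>. (Qf \<omega> / (real n - 1) - sig2)\<^sup>2 \<partial>S) = (\<integral>\<omega>. (Qf \<omega>)\<^sup>2 \<partial>S) / (real n - 1)\<^sup>2 - (2 * sig2 / (real n - 1)) * (\<integral>\<omega>. Qf \<omega> \<partial>S) + sig2\<^sup>2"
    unfolding eq using iQ iQ2 by (simp add: P.prob_space)
  also have "\<dots> \<le> sig2 / real n"
    unfolding Qf_def EQ2[OF n0] EQ[OF n0] EE02 EE21 EE40
    apply (rule var_alg)
    using n mm42 mm_nonneg2 by (auto simp: sig2_def)
  finally show ?thesis unfolding Qf_def .
qed

lemma iQ: "integrable S (\<lambda>\<omega>. S2 n \<omega> - (S1 n \<omega>)\<^sup>2 / real n)"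
proof -
  have "(\<lambda>\<omega>. S2 n \<omega> - (S1 n \<omega>)\<^sup>2 / real n) = (\<lambda>\<omega>. P 0 1 0 n \<omega> - P 2 0 0 n \<omega> / real n)"
    by (simp add: P_def fun_eq_iff)
  then show ?thesis by simp
qed

lemma iQ2: assumes "n > 0" shows "integrable S (\<lambda>\<omega>. (S2 n \<omega> - (S1 n \<omega>)\<^sup>2 / real n)\<^sup>2)"
proof -
  have "(\<lambda>\<omega>. (S2 n \<omega> - (S1 n \<omega>)\<^sup>2 / real n)\<^sup>2) = (\<lambda>\<omega>. P 0 2 0 n \<omega> - 2 * P 2 1 0 n \<omega> / real n + P 4 0 0 n \<omega> / (real n)\<^sup>2)"
    using assms by (auto simp: P_def field_simps power2_eq_square eval_nat_numeral intro!: ext)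
  then show ?thesis by simp
qed

lemma sts_comb: "tp_sigma_tilde_sq eps (comb_seq (tp_T1 eps) \<omega> \<omega>') = tp_sigma_tilde_sq eps \<omega>"
  unfolding sts_eq S1_comb S2_comb ..

lemma N2_comb: "tp_N2 eps (comb_seq (tp_T1 eps) \<omega> \<omega>') = tp_N2 eps \<omega>"
  unfolding tp_N2_def tp_T2_def sts_comb ..

lemma T2_pos: "eps > 0 \<Longrightarrow> tp_T2 eps \<omega> \<ge> 1 / eps"
  unfolding tp_T2_def using sts_nonneg[of eps \<omega>] by simp

lemma T2_le_N2: "eps > 0 \<Longrightarrow> tp_T2 eps \<omega> \<le> real (tp_N2 eps \<omega>)"
  unfolding tp_N2_def by linarith

lemma N2_pos: "eps > 0 \<Longrightarrow> tp_N2 eps \<omega> \<ge> 1"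
proof -
  assume e: "eps > 0"
  have "0 < tp_T2 eps \<omega>" using T2_pos[OF e, of \<omega>] e by (smt (verit) divide_pos_pos)
  then have "0 < real (tp_N2 eps \<omega>)" using T2_le_N2[OF e, of \<omega>] by simp
  then show ?thesis by simp
qed

lemma comb_add': "comb_seq n \<omega> \<omega>' (n + i) = \<omega>' i"
  using comb_seq_add[of n \<omega> \<omega>' i] by (simp add: add.commute)

lemma muhat_comb: "tp_mu_hat eps (comb_seq (tp_T1 eps) \<omega> \<omega>') = (\<Sum>i<tp_N2 eps \<omega>. \<omega>' i) / real (tp_N2 eps \<omega>)"
  unfolding tp_mu_hat_def N2_comb comb_add' ..

lemma sts_meas[measurable]: "tp_sigma_tilde_sq eps \<in> borel_measurable S"
  unfolding sts_eq[abs_def] by measurable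

lemma T2_meas[measurable]: "tp_T2 eps \<in> borel_measurable S"
  unfolding tp_T2_def[abs_def] by measurable

lemma N2_meas[measurable]: "tp_N2 eps \<in> measurable S (count_space UNIV)"
  unfolding tp_N2_def[abs_def] by measurable

lemma muhat_meas[measurable]: "tp_mu_hat eps \<in> borel_measurable S"
proof -
  have m: "(\<lambda>\<omega>. (\<Sum>i<m. \<omega> (tp_T1 eps + i)) / real m) \<in> borel_measurable S" if "m \<in> UNIV" for m
      unfolding measD by measurable
  have "(\<lambda>\<omega>. (\<lambda>m \<omega>. (\<Sum>i<m. \<omega> (tp_T1 eps + i)) / real m) (tp_N2 eps \<omega>) \<omega>) \<in> borel_measurable S"
    by (rule measurable_compose_countable'[where f="\<lambda>m \<omega>. (\<Sum>i<m. \<omega> (tp_T1 eps + i)) / real m", OF m N2_meas]) auto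
  then show ?thesis unfolding tp_mu_hat_def[abs_def] by simp
qed

lemma avg01: "\<omega> \<in> G \<Longrightarrow> m > 0 \<Longrightarrow> 0 \<le> (\<Sum>i<m. \<omega> (k + i)) / real m \<and> (\<Sum>i<m. \<omega> (k + i)) / real m \<le> 1"
proof -
  assume G: "\<omega> \<in> G" and m: "m > 0"
  have "(\<Sum>i<m. \<omega> (k + i)) \<le> (\<Sum>i<m. 1)" using G by (intro sum_mono) (auto simp: G_def)
  moreover have "0 \<le> (\<Sum>i<m. \<omega> (k + i))" using G by (intro sum_nonneg) (auto simp: G_def)
  ultimately show ?thesis using m by auto
qed

lemma muhat01: "eps > 0 \<Longrightarrow> \<omega> \<in> G \<Longrightarrow> 0 \<le> tp_mu_hat eps \<omega> \<and> tp_mu_hat eps \<omega> \<le> 1"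
  unfolding tp_mu_hat_def using avg01 N2_pos by (metis less_le_trans zero_less_one)

lemma avg_E: "m > 0 \<Longrightarrow> (\<integral>\<omega>. (\<Sum>i<m. \<omega> i) / real m \<partial>S) = mu"
proof -
  assume m: "m > 0"
  have "(\<lambda>\<omega>. (\<Sum>i<m. \<omega> i) / real m) = (\<lambda>\<omega>. mu + P 1 0 0 m \<omega> / real m)"
    using m by (auto simp: P_def S1_def sum_subtractf field_simps intro!: ext)
  then show ?thesis using EE10[of m] by (simp add: PEs P.prob_space)
qed

lemma avg_V: "m > 0 \<Longrightarrow> (\<integral>\<omega>. ((\<Sum>i<m. \<omega> i) / real m - mu)\<^sup>2 \<partial>S) = sig2 / real m"
proof -
  assume m: "m > 0"
  have "(\<lambda>\<omega>. ((\<Sum>i<m. \<omega> i) / real m - mu)\<^sup>2) = (\<lambda>\<omega>. P 2 0 0 m \<omega> / (real m)\<^sup>2)"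
    using m by (auto simp: P_def S1_def sum_subtractf field_simps intro!: ext)
  then show ?thesis using EE20[of m] m by (simp add: PEs power2_eq_square)
qed

lemma N2_gt0: "eps > 0 \<Longrightarrow> tp_N2 eps \<omega> > 0"
  using N2_pos[of eps \<omega>] by simp

lemma muhat_int: "eps > 0 \<Longrightarrow> integrable S (tp_mu_hat eps)"
  by (rule int_bound[where B=1]) (auto dest: muhat01)

lemma muhat_E: assumes e: "eps > 0" shows "(\<integral>\<omega>. tp_mu_hat eps \<omega> \<partial>S) = mu"
proof -
  have "(\<integral>\<omega>'. tp_mu_hat eps (comb_seq (tp_T1 eps) \<omega> \<omega>') \<partial>S) = mu" for \<omega>
    unfolding muhat_comb by (rule avg_E[OF N2_gt0[OF e]])
  then show ?thesis by (simp add: split_int[OF muhat_int[OF e], of "tp_T1 eps"] P.prob_space)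
qed

lemma mse_eq:
  assumes e: "eps > 0"
  shows "(\<integral>\<omega>. (tp_mu_hat eps \<omega> - mu)\<^sup>2 \<partial>S) = (\<integral>\<omega>. sig2 / real (tp_N2 eps \<omega>) \<partial>S)"
proof -
  have i: "integrable S (\<lambda>\<omega>. (tp_mu_hat eps \<omega> - mu)\<^sup>2)"
  proof (rule int_bound[where B=1])
    fix \<omega> assume "\<omega> \<in> G"
    then show "\<bar>(tp_mu_hat eps \<omega> - mu)\<^sup>2\<bar> \<le> 1" using muhat01[OF e] sqc by auto
  qed simp
  show ?thesis
    by (simp add: split_int[OF i, of "tp_T1 eps"] muhat_comb avg_V N2_gt0[OF e])
qed

lemma pw1:
  fixes e t s N :: real
  assumes e: "e > 0" and t: "t \<ge> 0" and s: "s \<ge> 0" and N: "N \<ge> 1 / e + t / e\<^sup>2"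
  shows "s / N \<le> s * e"
proof -
  have "1 / e \<le> N" using N t e by (smt (verit) divide_nonneg_nonneg zero_le_power2)
  moreover have "0 < 1 / e" using e by simp
  ultimately have Np: "0 < N" by linarith
  from \<open>1 / e \<le> N\<close> have "s / N \<le> s / (1 / e)" using e s Np by (intro divide_left_mono) auto
  then show ?thesis by simp
qed

lemma pw2:
  fixes e t s N :: real
  assumes e: "e > 0" and t: "t \<ge> 0" and s: "s > 0" and N: "N \<ge> 1 / e + t / e\<^sup>2"
  shows "s / N \<le> 2 * e\<^sup>2 + 4 * e * (t - s)\<^sup>2 / s"
proof (cases "t \<ge> s / 2")
  case True
  then have tp: "t > 0" using s by linarith
  have "t / e\<^sup>2 \<le> N" using N e by (smt (verit) divide_pos_pos)
  moreover have "0 < t / e\<^sup>2" using tp e by simp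
  ultimately have Np: "0 < N" by linarith
  from \<open>t / e\<^sup>2 \<le> N\<close> have "s / N \<le> s / (t / e\<^sup>2)" using e s tp Np by (intro divide_left_mono) auto
  also have "\<dots> = s * e\<^sup>2 / t" by simp
  also have "\<dots> \<le> 2 * e\<^sup>2" using True tp s e by (simp add: divide_le_eq)
  also have "\<dots> \<le> 2 * e\<^sup>2 + 4 * e * (t - s)\<^sup>2 / s" using e s by simp
  finally show ?thesis .
next
  case False
  have "s / N \<le> s * e" by (rule pw1[OF e t less_imp_le[OF s] N])
  also have "\<dots> \<le> 4 * e * (t - s)\<^sup>2 / s"
  proof -
    have "s / 2 \<le> s - t" using False by simp
    then have "(s/2)\<^sup>2 \<le> (s - t)\<^sup>2" using s by (intro power_mono) auto
    then have "(s/2)\<^sup>2 \<le> (t - s)\<^sup>2" by (simp add: power2_commute)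
    then have "s * s \<le> 4 * (t - s)\<^sup>2" by (simp add: power2_eq_square)
    then have "e * (s * s) \<le> e * (4 * (t - s)\<^sup>2)" using e by (intro mult_left_mono) auto
    then have "(s * e) * s \<le> 4 * e * (t - s)\<^sup>2" by (simp add: algebra_simps)
    then show ?thesis using s by (simp only: le_divide_eq) simp
  qed
  also have "\<dots> \<le> 2 * e\<^sup>2 + 4 * e * (t - s)\<^sup>2 / s" by simp
  finally show ?thesis .
qed

lemma sts_fun: "tp_sigma_tilde_sq eps = (\<lambda>\<omega>. (S2 (tp_T1 eps) \<omega> - (S1 (tp_T1 eps) \<omega>)\<^sup>2 / real (tp_T1 eps)) / (real (tp_T1 eps) - 1))"
  using sts_eq by (simp add: fun_eq_iff)

lemma sts_int: "integrable S (tp_sigma_tilde_sq eps)"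
  unfolding sts_fun using iQ by simp

lemma sts_E: "(\<integral>\<omega>. tp_sigma_tilde_sq eps \<omega> \<partial>S) = sig2"
proof -
  have n: "tp_T1 eps > 0" "real (tp_T1 eps) - 1 \<noteq> 0" using T1_ge2[of eps] by auto
  show ?thesis unfolding sts_fun using EQ[OF n(1)] n(2) by simp
qed

lemma sts_var_int: "integrable S (\<lambda>\<omega>. (tp_sigma_tilde_sq eps \<omega> - sig2)\<^sup>2)"
proof -
  have n: "tp_T1 eps > 0" "real (tp_T1 eps) - 1 \<noteq> 0" using T1_ge2[of eps] by auto
  show ?thesis unfolding sts_fun sq_exp[OF n(2)] using iQ iQ2[OF n(1)] by simp
qed

lemma T1_ge: "real (tp_T1 eps) \<ge> 1 / eps"
  unfolding tp_T1_def by linarith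

lemma mse_bound:
  assumes e: "eps > 0"
  shows "(\<integral>\<omega>. sig2 / real (tp_N2 eps \<omega>) \<partial>S) \<le> 6 * eps\<^sup>2"
proof -
  have s0: "0 \<le> sig2" using mm_nonneg2 by (simp add: sig2_def)
  have s1: "sig2 \<le> 1" using mm2_le1 by (simp add: sig2_def)
  have int_r: "integrable S (\<lambda>\<omega>. sig2 / real (tp_N2 eps \<omega>))"
  proof (rule int_bound[where B=sig2])
    fix \<omega> :: "nat \<Rightarrow> real"
    have "sig2 / real (tp_N2 eps \<omega>) \<le> sig2 / 1" using N2_pos[OF e, of \<omega>] s0
      by (intro divide_left_mono) auto
    then show "\<bar>sig2 / real (tp_N2 eps \<omega>)\<bar> \<le> sig2" using s0 by simp
  qed measurable
  have Nb: "real (tp_N2 eps \<omega>) \<ge> 1 / eps + tp_sigma_tilde_sq eps \<omega> / eps\<^sup>2" for \<omega>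
    using T2_le_N2[OF e, of \<omega>] unfolding tp_T2_def .
  show ?thesis
  proof (cases "sig2 \<le> 6 * eps")
    case True
    have "(\<integral>\<omega>. sig2 / real (tp_N2 eps \<omega>) \<partial>S) \<le> (\<integral>\<omega>. sig2 * eps \<partial>S)"
      by (rule integral_mono[OF int_r]) (auto intro!: pw1[OF e sts_nonneg s0 Nb])
    also have "\<dots> = sig2 * eps" by (simp add: P.prob_space)
    also have "\<dots> \<le> 6 * eps * eps" using True e by (intro mult_right_mono) auto
    finally show ?thesis by (simp add: power2_eq_square)
  next
    case False
    then have sp: "sig2 > 0" using e by linarith
    have "1 / eps > 6" using False s1 e by (simp add: field_simps)
    then have n3: "tp_T1 eps \<ge> 3" using T1_ge[of eps] by linarith
    have n0: "real (tp_T1 eps) > 0" using n3 by simp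
    have "(\<integral>\<omega>. sig2 / real (tp_N2 eps \<omega>) \<partial>S) \<le>
        (\<integral>\<omega>. 2 * eps\<^sup>2 + (4 * eps / sig2) * (tp_sigma_tilde_sq eps \<omega> - sig2)\<^sup>2 \<partial>S)"
    proof (rule integral_mono[OF int_r])
      show "integrable S (\<lambda>\<omega>. 2 * eps\<^sup>2 + (4 * eps / sig2) * (tp_sigma_tilde_sq eps \<omega> - sig2)\<^sup>2)"
        using sts_var_int by simp
      fix \<omega> show "sig2 / real (tp_N2 eps \<omega>) \<le> 2 * eps\<^sup>2 + (4 * eps / sig2) * (tp_sigma_tilde_sq eps \<omega> - sig2)\<^sup>2"
        using pw2[OF e sts_nonneg sp Nb] by simp
    qed
    also have "\<dots> = 2 * eps\<^sup>2 + (4 * eps / sig2) * (\<integral>\<omega>. (tp_sigma_tilde_sq eps \<omega> - sig2)\<^sup>2 \<partial>S)"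
      using sts_var_int by (simp add: P.prob_space)
    also have "\<dots> \<le> 2 * eps\<^sup>2 + (4 * eps / sig2) * (sig2 / real (tp_T1 eps))"
    proof -
      have "(\<integral>\<omega>. (tp_sigma_tilde_sq eps \<omega> - sig2)\<^sup>2 \<partial>S) \<le> sig2 / real (tp_T1 eps)"
        unfolding sts_fun using var_bound[OF n3] .
      then show ?thesis using e sp by (intro add_left_mono mult_left_mono) auto
    qed
    also have "\<dots> = 2 * eps\<^sup>2 + 4 * eps * (1 / real (tp_T1 eps))" using sp by simp
    also have "\<dots> \<le> 2 * eps\<^sup>2 + 4 * eps * eps"
    proof -
      have "1 / real (tp_T1 eps) \<le> eps" using T1_ge[of eps] e n0
        by (simp add: divide_le_eq field_simps)
      then show ?thesis using e by (intro add_left_mono mult_left_mono) auto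
    qed
    finally show ?thesis by (simp add: power2_eq_square)
  qed
qed

lemma ns_int: "integrable S (tp_num_samples eps)"
proof -
  have "tp_num_samples eps = (\<lambda>\<omega>. 2 / eps + tp_sigma_tilde_sq eps \<omega> / eps\<^sup>2)"
    by (simp add: fun_eq_iff tp_num_samples_def tp_T2_def)
  then show ?thesis using sts_int by simp
qed

lemma ns_E: "(\<integral>\<omega>. tp_num_samples eps \<omega> \<partial>S) = sig2 / eps\<^sup>2 + 2 / eps"
proof -
  have "tp_num_samples eps = (\<lambda>\<omega>. 2 / eps + tp_sigma_tilde_sq eps \<omega> / eps\<^sup>2)"
    by (simp add: fun_eq_iff tp_num_samples_def tp_T2_def)
  then show ?thesis using sts_int sts_E by (simp add: P.prob_space)
qed

end

theorem theorem3p1: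
  fixes D :: "real measure" and \<epsilon> :: real
  assumes D_prob: "prob_space D"
    and D_borel: "sets D = sets borel"
    and D_supp: "AE x in D. 0 \<le> x \<and> x \<le> 1"
    and eps_pos: "0 < \<epsilon>"
  defines "\<mu> \<equiv> prob_space.expectation D (\<lambda>x. x)"
    and "\<sigma>2 \<equiv> prob_space.variance D (\<lambda>x. x)"
    and "\<Omega> \<equiv> PiM (UNIV :: nat set) (\<lambda>_. D)"
  shows "(integrable \<Omega> (tp_mu_hat \<epsilon>) \<and> (\<integral>\<omega>. tp_mu_hat \<epsilon> \<omega> \<partial>\<Omega>) = \<mu>) \<and>
         sqrt (\<integral>\<omega>. (tp_mu_hat \<epsilon> \<omega> - \<mu>)\<^sup>2 \<partial>\<Omega>) \<le> sqrt 6 * \<epsilon> \<and>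
         (integrable \<Omega> (tp_num_samples \<epsilon>) \<and>
         (\<integral>\<omega>. tp_num_samples \<epsilon> \<omega> \<partial>\<Omega>) = \<sigma>2 / \<epsilon>\<^sup>2 + 2 / \<epsilon>)"
proof -
  have "tp_loc D"
    unfolding tp_loc_def tp_loc_axioms_def sequence_space_def product_prob_space_def
      product_prob_space_axioms_def product_sigma_finite_def
    using D_prob D_borel D_supp by (auto simp: prob_space_imp_sigma_finite)
  then interpret tp_loc D .
  have mu_eq: "\<mu> = mu" unfolding \<mu>_def mu_def ..
  have sig_eq: "\<sigma>2 = sig2" unfolding \<sigma>2_def sig2_def mm_def mu_def ..
  have Om: "\<Omega> = S" unfolding \<Omega>_def ..
  have "sqrt (\<integral>\<omega>. (tp_mu_hat \<epsilon> \<omega> - \<mu>)\<^sup>2 \<partial>\<Omega>) \<le> sqrt (6 * \<epsilon>\<^sup>2)"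
    unfolding Om mu_eq mse_eq[OF eps_pos] by (rule real_sqrt_le_mono[OF mse_bound[OF eps_pos]])
  also have "\<dots> = sqrt 6 * \<epsilon>" using eps_pos by (simp add: real_sqrt_mult)
  finally have "sqrt (\<integral>\<omega>. (tp_mu_hat \<epsilon> \<omega> - \<mu>)\<^sup>2 \<partial>\<Omega>) \<le> sqrt 6 * \<epsilon>" .
  then show ?thesis
    unfolding Om mu_eq sig_eq using muhat_int[OF eps_pos] muhat_E[OF eps_pos] ns_int ns_E by simp
qed

end
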